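(* Under the assumptions of the context, the $r\times r$ block $T=(Q_0)_{1,1}$ is a Jacobian matrix: there exist new local coordinates $\hat t_1,\dots,\hat t_r$ on $\mathbb C^r$ such that $T_{ij}=\partial_j\hat t_i$ for $1\le i,j\le r$, where $\partial_j=\partial/\partial t_j$.
   Context: Let $q_i=e^{t_i}$, $\partial_i=q_i\partial/\partial q_i$, $K$ a ring of functions of $q$, $h$ a complex parameter. $\mathcal A=K[b_1,\dots,b_r]/(\mathcal R_1,\dots,\mathcal R_u)$ with relations homogeneous for degrees $|b_i|=2$ and integers $|q_j|\ge0$, free over $K$ of rank $s+1$, deforming $\mathcal A_0=\mathbb C[b]/(\mathcal R_i|_{q=0})$ with $\dim\mathcal A_0=s+1$. $D^h$ is the ring of differential operators generated by $h\partial_1,\dots,h\partial_r$ over $K[h]$; $M^h=D^h/(D^h_1,\dots,D^h_u)$ is a quantization of $\mathcal A$ (free over $K[h]$ of rank $s+1$, $\lim_{h\to0}S(D^h_i)=\mathcal R_i$, $S$ replacing $h\partial_j$ by $b_j$), each $D^h_i$ homogeneous with $\deg h=2$, $\deg q_j=|q_j|$, $\deg\partial_j=0$. The $K[h]$-basis $[P_0],\dots,[P_s]$ consists of standard monomials in $h\partial_j$ for a Gröbner basis of the ideal (graded reverse lexicographic order), with $P_0=1$, $P_i=h\partial_i$ ($1\le i\le r$), and $c_j=\lim_{h\to0}S(P_j)$ a $K$-basis of $\mathcal A$. $\Omega^h_i$ is defined by $[\partial_iP_j]=\sum_k(\Omega^h_i)_{kj}[P_k]$, $\omega_i$ by $[b_ic_j]=\sum_k(\omega_i)_{kj}[c_k]$,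 $\Omega^h=\sum\Omega^h_idt_i$ (flat), $\omega=\sum\omega_idt_i$. Assume $\Omega^h=\frac1h\omega+\theta$, and that the zero-th order term of any second order element of the Gröbner basis is independent of $h$. Let $Q_0$ solve $Q_0^{-1}dQ_0=\theta$ on a connected domain with $Q_0=I$ at some point; then $Q_0$ is block upper triangular in its first two block rows, with $(0,0)$ block $1$ and $(1,1)$ block $T$, where blocks refer to the decomposition of $M^h$ by degree in $h\partial$ (degree $0$ spanned by $[1]$, degree $1$ by $[h\partial_1],\dots,[h\partial_r]$). *)

theory Defs
  imports "HOL-Analysis.Analysis"
begin

text \<open>Coordinates t = (t_1,...,t_r) range over complex^'i, with r = CARD('i).
  Multi-indices (exponents of monomials in h d_1,...,h d_r) are functions 'i => nat.
  The K[h]-basis [P_alpha] of M^h is indexed by the finite set S of exponents of the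
  standard monomials P_alpha = (h d)^alpha.  Matrices acting on M^h are functions
  mi => mi => complex (only entries indexed by S matter).\<close>

type_synonym 'i mi = "'i \<Rightarrow> nat"

definition mi0 :: "'i mi" where "mi0 = (\<lambda>_. 0)"

definition unitv :: "'i \<Rightarrow> 'i mi" where "unitv i = (\<lambda>k. if k = i then 1 else 0)"

definition incr :: "'i mi \<Rightarrow> 'i \<Rightarrow> 'i mi" where
  "incr \<alpha> i = (\<lambda>k. \<alpha> k + (if k = i then 1 else 0))"

definition order_ideal :: "'i mi set \<Rightarrow> bool" where
  "order_ideal S \<longleftrightarrow> (\<forall>\<alpha> \<beta>. \<alpha> \<in> S \<longrightarrow> (\<forall>k. \<beta> k \<le> \<alpha> k) \<longrightarrow> \<beta> \<in> S)"

definition cholo_on :: "(complex^'i::finite) set \<Rightarrow> (complex^'i \<Rightarrow> complex) \<Rightarrow> bool" where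
  "cholo_on U f \<longleftrightarrow> (\<forall>t\<in>U. \<exists>c::complex^'i.
      (f has_derivative (\<lambda>v. \<Sum>j\<in>UNIV. c $ j * v $ j)) (at t))"

text \<open>Complex partial derivative d/dt_j (for q_j = e^{t_j} this is q_j d/dq_j).\<close>
definition has_cpartial :: "(complex^'i::finite \<Rightarrow> complex) \<Rightarrow> 'i \<Rightarrow> complex^'i \<Rightarrow> complex \<Rightarrow> bool" where
  "has_cpartial f j t D \<longleftrightarrow> ((\<lambda>z. f (t + (\<chi> k. if k = j then z else 0))) has_field_derivative D) (at 0)"

definition cpd :: "(complex^'i::finite \<Rightarrow> complex) \<Rightarrow> 'i \<Rightarrow> complex^'i \<Rightarrow> complex" where
  "cpd f j t = deriv (\<lambda>z. f (t + (\<chi> k. if k = j then z else 0))) 0"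

definition mmul :: "'i mi set \<Rightarrow> ('i mi \<Rightarrow> 'i mi \<Rightarrow> complex) \<Rightarrow> ('i mi \<Rightarrow> 'i mi \<Rightarrow> complex)
   \<Rightarrow> 'i mi \<Rightarrow> 'i mi \<Rightarrow> complex" where
  "mmul S A B k l = (\<Sum>m\<in>S. A k m * B m l)"

definition Omega :: "('i \<Rightarrow> complex^'i \<Rightarrow> 'i mi \<Rightarrow> 'i mi \<Rightarrow> complex)
   \<Rightarrow> ('i \<Rightarrow> complex^'i \<Rightarrow> 'i mi \<Rightarrow> 'i mi \<Rightarrow> complex)
   \<Rightarrow> complex \<Rightarrow> 'i \<Rightarrow> complex^'i \<Rightarrow> 'i mi \<Rightarrow> 'i mi \<Rightarrow> complex" where
  "Omega \<omega> \<theta> h i t k l = \<omega> i t k l / h + \<theta> i t k l"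

end

theory Submission
  imports Defs
begin

lemma bl_axis: "bounded_linear (\<lambda>z::complex. (\<chi> k. if k = j then z else 0) :: complex^'i::finite)"
proof -
  have "linear (\<lambda>z::complex. (\<chi> k. if k = j then z else 0) :: complex^'i::finite)"
    by (auto simp: linear_iff vec_eq_iff)
  then show ?thesis by (simp add: linear_conv_bounded_linear)
qed

lemma vec0 [simp]: "(\<chi> k. (0::complex)) = (0::complex^'i::finite)" by (simp add: vec_eq_iff)

lemma hd_cpartial:
  fixes f :: "complex^'i::finite \<Rightarrow> complex"
  assumes "(f has_derivative (\<lambda>v. \<Sum>l\<in>UNIV. c l * v$l)) (at t)"
  shows "has_cpartial f j t (c j)"
proof -
  have l: "((\<lambda>z. t + (\<chi> k. if k = j then z else 0)) has_derivative (\<lambda>z. (\<chi> k. if k = j then z else 0) :: complex^'i)) (at 0)"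
    by (auto intro!: derivative_eq_intros bounded_linear_imp_has_derivative bl_axis)
  have e: "t + (\<chi> k. if k = j then 0 else 0) = t" by (simp add: vec_eq_iff)
  have "((f \<circ> (\<lambda>z. t + (\<chi> k. if k = j then z else 0))) has_derivative
     ((\<lambda>v. \<Sum>l\<in>UNIV. c l * v$l) \<circ> (\<lambda>z. (\<chi> k. if k = j then z else 0) :: complex^'i))) (at 0)"
    by (rule diff_chain_at[OF l]) (simp add: e assms)
  moreover have "((\<lambda>v. \<Sum>l\<in>UNIV. c l * v$l) \<circ> (\<lambda>z. (\<chi> k. if k = j then z else 0) :: complex^'i)) = (*) (c j)"
    by (auto simp: fun_eq_iff if_distrib cong: if_cong)
  ultimately show ?thesis
    by (simp add: has_cpartial_def has_field_derivative_def comp_def)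
qed

lemma hd_unique:
  fixes f :: "complex^'i::finite \<Rightarrow> complex"
  assumes "(f has_derivative (\<lambda>v. \<Sum>l\<in>UNIV. c l * v$l)) (at t)"
    and "\<And>j. has_cpartial f j t (d j)"
  shows "(f has_derivative (\<lambda>v. \<Sum>l\<in>UNIV. d l * v$l)) (at t)"
proof -
  have "c j = d j" for j
    using hd_cpartial[OF assms(1), of j] assms(2)[of j] unfolding has_cpartial_def
    using DERIV_unique by blast
  then show ?thesis using assms(1) by simp
qed

lemma cpd_const:
  fixes g :: "complex^'i::finite \<Rightarrow> complex"
  assumes "open U" "t \<in> U" "\<And>s. s \<in> U \<Longrightarrow> g s = c"
  shows "cpd g a t = 0"
proof -
  let ?L = "\<lambda>z. t + (\<chi> k. if k = a then z else 0) :: complex^'i"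
  have "continuous_on UNIV ?L"
    by (intro continuous_intros linear_continuous_on bounded_linear.linear bl_axis)
  then have o: "open (?L -` U)" using assms(1) by (simp add: open_vimage)
  have "0 \<in> ?L -` U" using assms(2) by (simp add: vec_eq_iff)
  then have ev: "eventually (\<lambda>z. z \<in> ?L -` U) (nhds 0)" using o eventually_nhds_in_open by blast
  have "((\<lambda>z. g (?L z)) has_field_derivative 0) (at 0)"
  proof -
    have "((\<lambda>z. c) has_field_derivative 0) (at 0)" by simp
    moreover have "eventually (\<lambda>z. g (?L z) = c) (nhds 0)"
      using ev by eventually_elim (use assms(3) in auto)
    ultimately show ?thesis using DERIV_cong_ev[of 0 0 "\<lambda>z. g (?L z)" "\<lambda>z. c" 0 0]
      by simp
  qed
  then show ?thesis unfolding cpd_def by (rule DERIV_imp_deriv)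
qed

lemma cholo_cont: "cholo_on U f \<Longrightarrow> continuous_on U f"
  unfolding cholo_on_def
  by (meson continuous_at_imp_continuous_on has_derivative_continuous)


lemma sc_comp: "(s *\<^sub>R (v::complex^'i::finite)) $ l = complex_of_real s * v $ l"
  by (subst vector_scaleR_component) (simp add: scaleR_conv_of_real)

lemma poincare_ball:
  fixes f :: "'i::finite \<Rightarrow> complex^'i \<Rightarrow> complex" and D :: "'i \<Rightarrow> 'i \<Rightarrow> complex^'i \<Rightarrow> complex"
  assumes B: "ball p r \<subseteq> U"
    and der: "\<And>j y. y \<in> U \<Longrightarrow> (f j has_derivative (\<lambda>v. \<Sum>l\<in>UNIV. D l j y * v$l)) (at y)"
    and cont: "\<And>l j. continuous_on U (D l j)"
    and sym: "\<And>l j y. y \<in> U \<Longrightarrow> D l j y = D j l y"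
  shows "\<exists>F. \<forall>x\<in>ball p r. (F has_derivative (\<lambda>v. \<Sum>k\<in>UNIV. f k x * v$k)) (at x)"
proof -
  define Y where "Y x s = p + s *\<^sub>R (x - p)" for x and s::real
  have Y_in: "Y x s \<in> ball p r" if "x \<in> ball p r" "s \<in> cbox 0 1" for x s
  proof -
    have "dist p (Y x s) = \<bar>s\<bar> * norm (x - p)" by (simp add: Y_def dist_norm)
    also have "\<dots> \<le> norm (x - p)" using that by (auto intro!: mult_left_le_one_le)
    also have "\<dots> < r" using that by (simp add: dist_norm norm_minus_commute)
    finally show ?thesis by simp
  qed
  have Y_U: "Y x s \<in> U" if "x \<in> ball p r" "s \<in> cbox 0 1" for x s using Y_in[OF that] B by blast
  have fcont: "continuous_on U (f j)" for j
    using der by (meson continuous_at_imp_continuous_on has_derivative_continuous)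
  have Ycont: "continuous_on (ball p r \<times> cbox 0 1) (\<lambda>z. Y (fst z) (snd z))"
    unfolding Y_def by (intro continuous_intros)
  have compc: "continuous_on (ball p r \<times> cbox 0 1) (\<lambda>z. h (Y (fst z) (snd z)))"
    if "continuous_on U h" for h :: "complex^'i \<Rightarrow> complex"
    using continuous_on_compose2[OF that Ycont] Y_U by force
  define g where "g x s = (\<Sum>j\<in>UNIV. f j (Y x s) * (x - p)$j)" for x s
  define A where "A k x s = complex_of_real s * (\<Sum>j\<in>UNIV. D k j (Y x s) * (x - p)$j) + f k (Y x s)" for k x s
  define P where "P k = Blinfun (\<lambda>v::complex^'i. v$k)" for k
  have P_apply: "blinfun_apply (P k) v = v$k" for k v
    unfolding P_def by (simp add: bounded_linear_Blinfun_apply bounded_linear_vec_nth)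
  define fx where "fx x s = (\<Sum>k\<in>UNIV. blinfun_mult_right (A k x s) o\<^sub>L P k)" for x s
  have fx_apply: "blinfun_apply (fx x s) v = (\<Sum>k\<in>UNIV. A k x s * v$k)" for x s v
    unfolding fx_def by (simp add: blinfun.sum_left P_apply)
  have Acont: "continuous_on (ball p r \<times> cbox 0 1) (\<lambda>z. A k (fst z) (snd z))" for k
    unfolding A_def
    by (intro continuous_intros compc cont fcont)
  have fx_cont: "continuous_on (ball p r \<times> cbox 0 1) (\<lambda>(x, s). fx x s)"
    unfolding fx_def split_beta
    by (intro continuous_intros Acont)
  have g_der: "((\<lambda>x. g x s) has_derivative blinfun_apply (fx x s)) (at x within ball p r)"
    if x: "x \<in> ball p r" and s: "s \<in> cbox 0 1" for x s
  proof -
    have Yd: "((\<lambda>x. Y x s) has_derivative (\<lambda>v. s *\<^sub>R v)) (at x)"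
      unfolding Y_def by (auto intro!: derivative_eq_intros)
    have fd: "((\<lambda>x. f j (Y x s)) has_derivative (\<lambda>v. \<Sum>l\<in>UNIV. D l j (Y x s) * (s *\<^sub>R v)$l)) (at x)" for j
      using diff_chain_at[OF Yd der[OF Y_U[OF x s], of j]] by (simp add: comp_def)
    have nd: "((\<lambda>x. (x - p) $ j) has_derivative (\<lambda>v. v $ j)) (at x)" for j
    proof -
      have "((\<lambda>x. x - p) has_derivative (\<lambda>v. v)) (at x)" by (auto intro!: derivative_eq_intros)
      from bounded_linear.has_derivative[OF bounded_linear_vec_nth this, of j] show ?thesis .
    qed
    have "((\<lambda>x. g x s) has_derivative
       (\<lambda>v. \<Sum>j\<in>UNIV. f j (Y x s) * v$j + (\<Sum>l\<in>UNIV. D l j (Y x s) * (s *\<^sub>R v)$l) * (x - p)$j)) (at x)"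
      unfolding g_def
      by (intro has_derivative_sum has_derivative_mult fd nd)
    moreover have "(\<lambda>v. \<Sum>j\<in>UNIV. f j (Y x s) * v$j + (\<Sum>l\<in>UNIV. D l j (Y x s) * (s *\<^sub>R v)$l) * (x - p)$j)
        = blinfun_apply (fx x s)"
    proof
      fix v :: "complex^'i"
      have "(\<Sum>j\<in>UNIV. (\<Sum>l\<in>UNIV. D l j (Y x s) * (s *\<^sub>R v)$l) * (x - p)$j)
          = (\<Sum>j\<in>UNIV. \<Sum>l\<in>UNIV. complex_of_real s * D l j (Y x s) * (x - p)$j * v$l)"
        unfolding sc_comp by (simp add: sum_distrib_left sum_distrib_right mult_ac)
      also have "\<dots> = (\<Sum>l\<in>UNIV. \<Sum>j\<in>UNIV. complex_of_real s * D l j (Y x s) * (x - p)$j * v$l)"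
        by (rule sum.swap)
      also have "\<dots> = (\<Sum>l\<in>UNIV. complex_of_real s * (\<Sum>j\<in>UNIV. D l j (Y x s) * (x - p)$j) * v$l)"
        by (simp add: sum_distrib_right sum_distrib_left mult_ac)
      finally show "(\<Sum>j\<in>UNIV. f j (Y x s) * v$j + (\<Sum>l\<in>UNIV. D l j (Y x s) * (s *\<^sub>R v)$l) * (x - p)$j)
        = blinfun_apply (fx x s) v"
        by (simp add: fx_apply A_def sum.distrib distrib_right add_ac)
    qed
    ultimately show ?thesis by (auto intro: has_derivative_at_withinI)
  qed
  have g_int: "g x integrable_on cbox 0 1" if x: "x \<in> ball p r" for x
  proof -
    have "continuous_on (cbox 0 1) (g x)"
    proof -
      have c1: "continuous_on ((\<lambda>s. (x, s)) ` cbox 0 1) (\<lambda>z. g (fst z) (snd z))"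
        unfolding g_def
        by (rule continuous_on_subset[of "ball p r \<times> cbox 0 1"]) (use x in \<open>auto intro!: continuous_intros compc[OF fcont, simplified]\<close>)
      have "continuous_on (cbox 0 1) ((\<lambda>z. g (fst z) (snd z)) \<circ> (\<lambda>s. (x, s)))"
        by (rule continuous_on_compose[OF _ c1]) (intro continuous_intros)
      then show ?thesis by (simp add: comp_def)
    qed
    then show ?thesis by (rule integrable_continuous)
  qed
  have A_int: "(A k x has_integral f k x) (cbox 0 1)" if x: "x \<in> ball p r" for k x
  proof -
    have "((\<lambda>s. s *\<^sub>R f k (Y x s)) has_vector_derivative A k x s) (at s within {0..1})"
      if s: "s \<in> {0..1}" for s
    proof -
      have sc: "s \<in> cbox 0 1" using s by simp
      have Yd: "((\<lambda>s. Y x s) has_derivative (\<lambda>h. h *\<^sub>R (x - p))) (at s)"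
        unfolding Y_def by (auto intro!: derivative_eq_intros)
      have fd: "((\<lambda>s. f k (Y x s)) has_derivative (\<lambda>h. \<Sum>l\<in>UNIV. D l k (Y x s) * (h *\<^sub>R (x - p))$l)) (at s)"
        using diff_chain_at[OF Yd der[OF Y_U[OF x sc], of k]] by (simp add: comp_def)
      have "((\<lambda>s. s *\<^sub>R f k (Y x s)) has_derivative
          (\<lambda>h. s *\<^sub>R (\<Sum>l\<in>UNIV. D l k (Y x s) * (h *\<^sub>R (x - p))$l) + h *\<^sub>R f k (Y x s))) (at s)"
        by (rule has_derivative_eq_rhs[OF has_derivative_scaleR[OF has_derivative_ident fd]]) simp
      moreover have "(\<lambda>h. s *\<^sub>R (\<Sum>l\<in>UNIV. D l k (Y x s) * (h *\<^sub>R (x - p))$l) + h *\<^sub>R f k (Y x s))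
          = (\<lambda>h. h *\<^sub>R A k x s)"
      proof
        fix h :: real
        have "(\<Sum>l\<in>UNIV. D l k (Y x s) * (h *\<^sub>R (x - p))$l)
            = complex_of_real h * (\<Sum>l\<in>UNIV. D k l (Y x s) * (x - p)$l)"
          unfolding sc_comp using sym[OF Y_U[OF x sc]] by (simp add: sum_distrib_left mult_ac)
        then show "s *\<^sub>R (\<Sum>l\<in>UNIV. D l k (Y x s) * (h *\<^sub>R (x - p))$l) + h *\<^sub>R f k (Y x s)
          = h *\<^sub>R A k x s"
          unfolding A_def by (simp only: scaleR_conv_of_real) (simp add: distrib_left mult_ac)
      qed
      ultimately show ?thesis
        by (auto simp: has_vector_derivative_def intro: has_derivative_at_withinI)
    qed
    from fundamental_theorem_of_calculus[OF _ this] show ?thesis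
      by (simp add: Y_def)
  qed
  define F where "F x = integral (cbox 0 1) (g x)" for x
  show ?thesis
  proof (intro exI ballI)
    fix x assume x: "x \<in> ball p r"
    have "(F has_derivative blinfun_apply (integral (cbox 0 1) (fx x))) (at x within ball p r)"
      unfolding F_def
      by (rule leibniz_rule[OF g_der g_int fx_cont x convex_ball])
    then have d: "(F has_derivative blinfun_apply (integral (cbox 0 1) (fx x))) (at x)"
      using x by (metis at_within_open open_ball)
    have fxint: "fx x integrable_on cbox 0 1"
    proof -
      have c2: "continuous_on ((\<lambda>s. (x, s)) ` cbox 0 1) (\<lambda>(x, s). fx x s)"
        by (rule continuous_on_subset[OF fx_cont]) (use x in auto)
      have "continuous_on (cbox 0 1) ((\<lambda>(x, s). fx x s) \<circ> (\<lambda>s. (x, s)))"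
        by (rule continuous_on_compose[OF _ c2]) (intro continuous_intros)
      then have "continuous_on (cbox 0 1) (fx x)"
        by (simp add: comp_def)
      then show ?thesis by (rule integrable_continuous)
    qed
    have eqv: "blinfun_apply (integral (cbox 0 1) (fx x)) v = (\<Sum>k\<in>UNIV. f k x * v$k)" for v
    proof -
      have "blinfun_apply (integral (cbox 0 1) (fx x)) v = integral (cbox 0 1) (\<lambda>s. \<Sum>k\<in>UNIV. A k x s * v$k)"
        by (subst blinfun_apply_integral[OF fxint]) (simp only: fx_apply)
      also have "\<dots> = (\<Sum>k\<in>UNIV. f k x * v$k)"
        by (intro integral_unique has_integral_sum finite has_integral_mult_left A_int x)
      finally show ?thesis .
    qed
    show "(F has_derivative (\<lambda>v. \<Sum>k\<in>UNIV. f k x * v$k)) (at x)"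
      by (rule has_derivative_eq_rhs[OF d]) (rule ext, rule eqv)
  qed
qed

theorem proposition5p2:
  fixes U :: "(complex^'i::finite) set"
    and t0 :: "complex^'i"
    and S :: "'i mi set"
    and \<omega> \<theta> :: "'i \<Rightarrow> complex^'i \<Rightarrow> 'i mi \<Rightarrow> 'i mi \<Rightarrow> complex"
    and Q0 :: "complex^'i \<Rightarrow> 'i mi \<Rightarrow> 'i mi \<Rightarrow> complex"
    and T :: "complex^'i \<Rightarrow> 'i \<Rightarrow> 'i \<Rightarrow> complex"
  assumes U: "open U" "connected U" "t0 \<in> U"
    and S_fin: "finite S"
    and S_ideal: "order_ideal S"
    and S_1: "mi0 \<in> S"
    and S_hd: "\<And>i. unitv i \<in> S"
    and holo_\<omega>: "\<And>i k l. k \<in> S \<Longrightarrow> l \<in> S \<Longrightarrow> cholo_on U (\<lambda>t. \<omega> i t k l)"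
    and holo_\<theta>: "\<And>i k l. k \<in> S \<Longrightarrow> l \<in> S \<Longrightarrow> cholo_on U (\<lambda>t. \<theta> i t k l)"
    and std: "\<And>i \<alpha> t k. t \<in> U \<Longrightarrow> \<alpha> \<in> S \<Longrightarrow> incr \<alpha> i \<in> S \<Longrightarrow> k \<in> S \<Longrightarrow>
                 \<omega> i t k \<alpha> = (if k = incr \<alpha> i then 1 else 0) \<and> \<theta> i t k \<alpha> = 0"
    and flat: "\<And>h i j t k l. h \<noteq> 0 \<Longrightarrow> t \<in> U \<Longrightarrow> k \<in> S \<Longrightarrow> l \<in> S \<Longrightarrow>
                 cpd (\<lambda>s. Omega \<omega> \<theta> h j s k l) i t + mmul S (Omega \<omega> \<theta> h i t) (Omega \<omega> \<theta> h j t) k l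
               = cpd (\<lambda>s. Omega \<omega> \<theta> h i s k l) j t + mmul S (Omega \<omega> \<theta> h j t) (Omega \<omega> \<theta> h i t) k l"
    and groebner0: "\<And>i j t. t \<in> U \<Longrightarrow> incr (unitv j) i \<notin> S \<Longrightarrow> \<theta> i t mi0 (unitv j) = 0"
    and holo_Q0: "\<And>k l. k \<in> S \<Longrightarrow> l \<in> S \<Longrightarrow> cholo_on U (\<lambda>t. Q0 t k l)"
    and Q0_ode: "\<And>i t k l. t \<in> U \<Longrightarrow> k \<in> S \<Longrightarrow> l \<in> S \<Longrightarrow>
                 has_cpartial (\<lambda>s. Q0 s k l) i t (mmul S (Q0 t) (\<theta> i t) k l)"
    and Q0_init: "\<And>k l. k \<in> S \<Longrightarrow> l \<in> S \<Longrightarrow> Q0 t0 k l = (if k = l then 1 else 0)"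
    and T_def: "\<And>t i j. T t i j = Q0 t (unitv i) (unitv j)"
  shows "\<forall>p\<in>U. \<exists>V. open V \<and> p \<in> V \<and> V \<subseteq> U \<and>
           (\<exists>that :: complex^'i \<Rightarrow> complex^'i.
              (\<forall>i. cholo_on V (\<lambda>s. that s $ i)) \<and>
              (\<forall>t\<in>V. \<forall>i j. has_cpartial (\<lambda>s. that s $ i) j t (T t i j)))"
  proof (intro ballI)
  fix p assume p: "p \<in> U"
  have inc: "incr mi0 b = unitv b" for b by (simp add: incr_def mi0_def unitv_def fun_eq_iff)
  have thsym: "\<theta> a t m (unitv b) = \<theta> b t m (unitv a)" if t: "t \<in> U" and m: "m \<in> S" for a b t m
  proof -
    have Oc: "Omega \<omega> \<theta> h b s n mi0 = (if n = unitv b then 1 else 0) / h"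
      if "s \<in> U" "n \<in> S" for h b s n
      using std[of s mi0 b n] that S_1 S_hd[of b] by (simp add: inc Omega_def)
    have cz: "cpd (\<lambda>s. Omega \<omega> \<theta> h b s m mi0) a t = 0" for h a b
      by (rule cpd_const[OF U(1) t]) (rule Oc[OF _ m])
    have mm: "mmul S (Omega \<omega> \<theta> h a t) (Omega \<omega> \<theta> h b t) m mi0 = Omega \<omega> \<theta> h a t m (unitv b) / h"
      for h a b
    proof -
      have "mmul S (Omega \<omega> \<theta> h a t) (Omega \<omega> \<theta> h b t) m mi0
          = (\<Sum>n\<in>S. (if n = unitv b then Omega \<omega> \<theta> h a t m n / h else 0))"
        unfolding mmul_def using Oc[OF t] by (intro sum.cong) auto
      also have "\<dots> = Omega \<omega> \<theta> h a t m (unitv b) / h"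
        using S_fin S_hd[of b] by (simp add: sum.delta')
      finally show ?thesis .
    qed
    have eq: "Omega \<omega> \<theta> h a t m (unitv b) = Omega \<omega> \<theta> h b t m (unitv a)" if h: "h \<noteq> 0" for h
      using flat[OF h t m S_1, of a b] h by (simp add: cz mm)
    from eq[of 1] eq[of 2]
    have e1: "\<omega> a t m (unitv b) + \<theta> a t m (unitv b) = \<omega> b t m (unitv a) + \<theta> b t m (unitv a)"
      and e2: "2 * \<omega> a t m (unitv b) + 4 * \<theta> a t m (unitv b) = 2 * \<omega> b t m (unitv a) + 4 * \<theta> b t m (unitv a)"
      by (simp_all add: Omega_def field_simps)
    have "2 * (\<theta> a t m (unitv b) - \<theta> b t m (unitv a))
       = (2 * \<omega> a t m (unitv b) + 4 * \<theta> a t m (unitv b) - (2 * \<omega> b t m (unitv a) + 4 * \<theta> b t m (unitv a)))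
         - 2 * ((\<omega> a t m (unitv b) + \<theta> a t m (unitv b)) - (\<omega> b t m (unitv a) + \<theta> b t m (unitv a)))"
      by (simp add: algebra_simps)
    also have "\<dots> = 0" using e1 e2 by simp
    finally show ?thesis by simp
  qed
  obtain r where r: "r > 0" "ball p r \<subseteq> U" using U(1) p open_contains_ball by blast
  define Dd where "Dd i l j y = mmul S (Q0 y) (\<theta> l y) (unitv i) (unitv j)" for i l j y
  have der: "((\<lambda>y. T y i j) has_derivative (\<lambda>v. \<Sum>l\<in>UNIV. Dd i l j y * v$l)) (at y)"
    if y: "y \<in> U" for i j y
  proof -
    obtain c where c: "((\<lambda>t. Q0 t (unitv i) (unitv j)) has_derivative (\<lambda>v. \<Sum>j\<in>UNIV. c $ j * v $ j)) (at y)"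
      using holo_Q0[OF S_hd S_hd] y unfolding cholo_on_def by blast
    have "((\<lambda>t. Q0 t (unitv i) (unitv j)) has_derivative (\<lambda>v. \<Sum>l\<in>UNIV. Dd i l j y * v$l)) (at y)"
      by (rule hd_unique[OF c]) (simp add: Dd_def Q0_ode[OF y S_hd S_hd])
    then show ?thesis by (simp add: T_def)
  qed
  have cont: "continuous_on U (Dd i l j)" for i l j
    unfolding Dd_def mmul_def
    by (intro continuous_on_sum continuous_on_mult cholo_cont holo_Q0 holo_\<theta> S_hd)
  have sym: "Dd i l j y = Dd i j l y" if "y \<in> U" for i l j y
    unfolding Dd_def mmul_def using thsym[OF that] by (intro sum.cong) auto
  have "\<forall>i. \<exists>F. \<forall>x\<in>ball p r. (F has_derivative (\<lambda>v. \<Sum>k\<in>UNIV. T x i k * v$k)) (at x)"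
  proof
    fix i
    show "\<exists>F. \<forall>x\<in>ball p r. (F has_derivative (\<lambda>v. \<Sum>k\<in>UNIV. T x i k * v$k)) (at x)"
      using poincare_ball[of p r U "\<lambda>j y. T y i j" "Dd i", OF r(2) der cont sym] by simp
  qed
  then obtain F where F: "\<And>i x. x \<in> ball p r \<Longrightarrow> (F i has_derivative (\<lambda>v. \<Sum>k\<in>UNIV. T x i k * v$k)) (at x)"
    by metis
  show "\<exists>V. open V \<and> p \<in> V \<and> V \<subseteq> U \<and>
           (\<exists>that :: complex^'i \<Rightarrow> complex^'i.
              (\<forall>i. cholo_on V (\<lambda>s. that s $ i)) \<and>
              (\<forall>t\<in>V. \<forall>i j. has_cpartial (\<lambda>s. that s $ i) j t (T t i j)))"
  proof (intro exI conjI allI ballI)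
    show "open (ball p r)" "p \<in> ball p r" "ball p r \<subseteq> U" using r by auto
    fix i
    show "cholo_on (ball p r) (\<lambda>s. (\<chi> i. F i s) $ i)"
      unfolding cholo_on_def
    proof
      fix t assume t: "t \<in> ball p r"
      show "\<exists>c::complex^'i. ((\<lambda>s. (\<chi> i. F i s) $ i) has_derivative (\<lambda>v. \<Sum>j\<in>UNIV. c $ j * v $ j)) (at t)"
        by (rule exI[of _ "\<chi> k. T t i k"]) (simp add: F[OF t])
    qed
  next
    fix t i j assume t: "t \<in> ball p r"
    show "has_cpartial (\<lambda>s. (\<chi> i. F i s) $ i) j t (T t i j)"
      using hd_cpartial[OF F[OF t, of i], of j] by simp
  qed
qed

end
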